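(* Let $p=p(m)$ with $m/p\to c\in(0,\infty)$ as $m,p\to\infty$. For each $m$ let $\mathbf{A}_m$ be a deterministic real $m\times p$ matrix with nonnegative entries such that $\frac{1}{mp}\operatorname{tr}(\mathbf{A}_m\mathbf{A}_m^\top)$ is uniformly bounded in $m$. Fix an integer $n\ge 2$ and $\sigma^2>0$, and for $k=1,\dots,n$ let $\tilde{\mathbf{A}}_m^k=\mathbf{A}_m+\sigma\mathbf{E}_m^k$, where $\mathbf{E}_m^1,\dots,\mathbf{E}_m^n$ are independent random $m\times p$ matrices with i.i.d. entries of mean zero, variance one and finite fourth moment. Let $\bar{\mathbf{A}}_m=\frac1n\sum_{k=1}^n\tilde{\mathbf{A}}_m^k$ and let $\mathbf{U}_m$ be the $m\times p$ matrix of all ones. Then, as $m,p\to\infty$ with $m/p\to c$, $$\Big|\tfrac1{mp}\operatorname{tr}(\bar{\mathbf{A}}_{m} \mathbf{U}_{m}^\top)-\tfrac1{mp}\operatorname{tr}(\mathbf{A}_{m} \mathbf{U}_{m}^\top)\Big|\xrightarrow{a.s.}0,\qquad \Big|\tfrac1{mp}\operatorname{tr}(\bar{\mathbf{A}}_{m} \mathbf{A}_{m}^\top)-\tfrac1{mp}\operatorname{tr}(\mathbf{A}_{m} \mathbf{A}_{m}^\top)\Big|\xrightarrow{a.s.}0,$$ $$\Big|\tfrac1{mp}\operatorname{tr}(\bar{\mathbf{A}}_{m} \bar{\mathbf{A}}^\top_{m})-\tfrac1{mp}\operatorname{tr}(\mathbf{A}_{m} \mathbf{A}_{m}^\top)-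\tfrac{\sigma^2}{n}\Big|\xrightarrow{a.s.}0.$$
   Context: The paper writes $\tilde X_{m,p}\overset{a.e.}{\sim}X_{m,p}$ ("asymptotic deterministic equivalent") to mean $|\tilde X_{m,p}-X_{m,p}|\to0$ almost surely as $m,p\to\infty$ with $m/p\to c\in(0,\infty)$, for a random sequence $\tilde X_{m,p}$ and a deterministic sequence $X_{m,p}$; the claim states the three resulting relations explicitly. *)

theory Defs
  imports "HOL-Probability.Probability"
begin

text \<open>Real m x p matrices are represented as functions nat => nat => real,
  only entries with i < m and j < p being relevant.
  trace_XYt m p X Y is tr(X Y^T) = sum over i<m, j<p of X i j * Y i j.\<close>
definition trace_XYt :: "nat \<Rightarrow> nat \<Rightarrow> (nat \<Rightarrow> nat \<Rightarrow> real) \<Rightarrow> (nat \<Rightarrow> nat \<Rightarrow> real) \<Rightarrow> real" where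
  "trace_XYt m p X Y = (\<Sum>i<m. \<Sum>j<p. X i j * Y i j)"

definition ones_mat :: "nat \<Rightarrow> nat \<Rightarrow> real" where
  "ones_mat i j = 1"

end

theory Submission imports Defs begin

lemma (in prob_space) ae_tendsto_zero_of_sq:
  fixes X :: "nat \<Rightarrow> 'a \<Rightarrow> real" and r :: "nat \<Rightarrow> real"
  assumes meas: "\<And>m. X m \<in> borel_measurable M"
    and int: "\<And>m. integrable M (\<lambda>\<omega>. (X m \<omega>)\<^sup>2)"
    and bd: "\<And>m. expectation (\<lambda>\<omega>. (X m \<omega>)\<^sup>2) \<le> K * r m"
    and sr: "summable r"
  shows "AE \<omega> in M. (\<lambda>m. X m \<omega>) \<longlonglongrightarrow> 0"
proof -
  have sE: "summable (\<lambda>m. expectation (\<lambda>\<omega>. (X m \<omega>)\<^sup>2))"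
    by (rule summable_comparison_test[where g="\<lambda>m. K * r m"])
       (use bd in \<open>auto intro!: summable_mult sr\<close>)
  have "(\<integral>\<^sup>+\<omega>. (\<Sum>m. ennreal ((X m \<omega>)\<^sup>2)) \<partial>M) = (\<Sum>m. \<integral>\<^sup>+\<omega>. ennreal ((X m \<omega>)\<^sup>2) \<partial>M)"
    by (rule nn_integral_suminf) (use meas in measurable)
  also have "\<dots> = (\<Sum>m. ennreal (expectation (\<lambda>\<omega>. (X m \<omega>)\<^sup>2)))"
    by (subst nn_integral_eq_integral[OF int]) auto
  also have "\<dots> \<noteq> \<top>"
    by (rule ennreal_suminf_neq_top[OF sE]) auto
  finally have "AE \<omega> in M. (\<Sum>m. ennreal ((X m \<omega>)\<^sup>2)) \<noteq> \<infinity>"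
    by (intro nn_integral_PInf_AE) (use meas in measurable)
  then show ?thesis
  proof eventually_elim
    case (elim \<omega>)
    then have "summable (\<lambda>m. (X m \<omega>)\<^sup>2)"
      by (intro summable_suminf_not_top) auto
    then have "(\<lambda>m. (X m \<omega>)\<^sup>2) \<longlonglongrightarrow> 0" by (rule summable_LIMSEQ_zero)
    then have "(\<lambda>m. sqrt ((X m \<omega>)\<^sup>2)) \<longlonglongrightarrow> sqrt 0" by (rule tendsto_real_sqrt)
    then show ?case by (simp add: tendsto_rabs_zero_iff)
  qed
qed

lemma (in prob_space) pair_indep:
  assumes ind: "indep_vars (\<lambda>_. borel) X I" and AB: "A \<inter> B = {}" "A \<subseteq> I" "B \<subseteq> I"
    and f: "f \<in> borel_measurable (PiM A (\<lambda>_. borel))"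
    and g: "g \<in> borel_measurable (PiM B (\<lambda>_. borel))"
  shows "indep_var borel (\<lambda>\<omega>. f (restrict (\<lambda>i. X i \<omega>) A)) borel (\<lambda>\<omega>. g (restrict (\<lambda>i. X i \<omega>) B))"
  using indep_var_compose[OF indep_var_restrict[OF ind AB] f g] by (simp add: comp_def)

lemma (in prob_space) sum_sq_expectation:
  fixes Y :: "'i \<Rightarrow> 'a \<Rightarrow> real"
  assumes fin: "finite T"
    and int1: "\<And>t. t \<in> T \<Longrightarrow> integrable M (Y t)"
    and int2: "\<And>t. t \<in> T \<Longrightarrow> integrable M (\<lambda>\<omega>. (Y t \<omega>)\<^sup>2)"
    and mean: "\<And>t. t \<in> T \<Longrightarrow> expectation (Y t) = 0"
    and ind: "\<And>s t. s \<in> T \<Longrightarrow> t \<in> T \<Longrightarrow> s \<noteq> t \<Longrightarrow> indep_var borel (Y s) borel (Y t)"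
  shows "integrable M (\<lambda>\<omega>. (\<Sum>t\<in>T. Y t \<omega>)\<^sup>2)"
    and "expectation (\<lambda>\<omega>. (\<Sum>t\<in>T. Y t \<omega>)\<^sup>2) = (\<Sum>t\<in>T. expectation (\<lambda>\<omega>. (Y t \<omega>)\<^sup>2))"
proof -
  have eq: "(\<lambda>\<omega>. (\<Sum>t\<in>T. Y t \<omega>)\<^sup>2) = (\<lambda>\<omega>. \<Sum>s\<in>T. \<Sum>t\<in>T. Y s \<omega> * Y t \<omega>)"
    by (simp add: power2_eq_square sum_product)
  have pint: "integrable M (\<lambda>\<omega>. Y s \<omega> * Y t \<omega>)" if "s \<in> T" "t \<in> T" for s t
  proof (cases "s = t")
    case True then show ?thesis using int2[OF that(1)] by (simp add: power2_eq_square)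
  next
    case False then show ?thesis using ind[OF that False] int1 that by (intro indep_var_integrable) auto
  qed
  show "integrable M (\<lambda>\<omega>. (\<Sum>t\<in>T. Y t \<omega>)\<^sup>2)"
    unfolding eq apply (rule Bochner_Integration.integrable_sum) apply (rule Bochner_Integration.integrable_sum) apply (rule pint) by auto
  have "expectation (\<lambda>\<omega>. (\<Sum>t\<in>T. Y t \<omega>)\<^sup>2) = (\<Sum>s\<in>T. \<Sum>t\<in>T. expectation (\<lambda>\<omega>. Y s \<omega> * Y t \<omega>))"
    unfolding eq using pint by (simp add: integral_sum integrable_sum)
  also have "\<dots> = (\<Sum>s\<in>T. expectation (\<lambda>\<omega>. (Y s \<omega>)\<^sup>2))"
  proof (rule sum.cong[OF refl])
    fix s assume s: "s \<in> T"
    have "(\<Sum>t\<in>T. expectation (\<lambda>\<omega>. Y s \<omega> * Y t \<omega>)) = (\<Sum>t\<in>T. if t = s then expectation (\<lambda>\<omega>. (Y s \<omega>)\<^sup>2) else 0)"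
    proof (rule sum.cong[OF refl])
      fix t assume t: "t \<in> T"
      show "expectation (\<lambda>\<omega>. Y s \<omega> * Y t \<omega>) = (if t = s then expectation (\<lambda>\<omega>. (Y s \<omega>)\<^sup>2) else 0)"
      proof (cases "t = s")
        case True then show ?thesis by (simp add: power2_eq_square)
      next
        case False
        then have "expectation (\<lambda>\<omega>. Y s \<omega> * Y t \<omega>) = expectation (Y s) * expectation (Y t)"
          using ind[OF s t] int1 s t by (intro indep_var_lebesgue_integral) auto
        then show ?thesis using mean[OF t] False by simp
      qed
    qed
    also have "\<dots> = expectation (\<lambda>\<omega>. (Y s \<omega>)\<^sup>2)" using s fin by (simp add: sum.delta)
    finally show "(\<Sum>t\<in>T. expectation (\<lambda>\<omega>. Y s \<omega> * Y t \<omega>)) = expectation (\<lambda>\<omega>. (Y s \<omega>)\<^sup>2)" .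
  qed
  finally show "expectation (\<lambda>\<omega>. (\<Sum>t\<in>T. Y t \<omega>)\<^sup>2) = (\<Sum>t\<in>T. expectation (\<lambda>\<omega>. (Y t \<omega>)\<^sup>2))" .
qed

theorem theorem2:
  fixes M :: "'a measure"
    and p :: "nat \<Rightarrow> nat" and c :: real
    and A :: "nat \<Rightarrow> nat \<Rightarrow> nat \<Rightarrow> real"
    and n :: nat and \<sigma> :: real
    and E :: "nat \<Rightarrow> nat \<Rightarrow> nat \<Rightarrow> nat \<Rightarrow> 'a \<Rightarrow> real"
    and \<xi> :: "'a \<Rightarrow> real"
    and B :: real
  assumes "prob_space M"
    and c_pos: "c > 0"
    and ratio: "(\<lambda>m. real m / real (p m)) \<longlonglongrightarrow> c"
    and p_inf: "filterlim p at_top sequentially"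
    and A_nonneg: "\<And>m i j. i < m \<Longrightarrow> j < p m \<Longrightarrow> A m i j \<ge> 0"
    and A_bdd: "\<And>m. m > 0 \<Longrightarrow> trace_XYt m (p m) (A m) (A m) / (real m * real (p m)) \<le> B"
    and n_ge: "n \<ge> 2"
    and sigma_pos: "\<sigma> > 0"
    and \<xi>_rv: "\<xi> \<in> borel_measurable M"
    and \<xi>_mean: "integrable M \<xi>" "prob_space.expectation M \<xi> = 0"
    and \<xi>_var: "integrable M (\<lambda>x. (\<xi> x)\<^sup>2)" "prob_space.expectation M (\<lambda>x. (\<xi> x)\<^sup>2) = 1"
    and \<xi>_4th: "integrable M (\<lambda>x. (\<xi> x) ^ 4)"
    and E_rv: "\<And>m k i j. E m k i j \<in> borel_measurable M"
    and E_distr: "\<And>m k i j. k < n \<Longrightarrow> i < m \<Longrightarrow> j < p m \<Longrightarrow>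
                    distr M borel (E m k i j) = distr M borel \<xi>"
    and E_indep: "\<And>m. prob_space.indep_vars M (\<lambda>_. borel) (\<lambda>(k, i, j). E m k i j)
                          ({..<n} \<times> {..<m} \<times> {..<p m})"
  defines "Abar \<equiv> (\<lambda>m \<omega> i j. (1 / real n) * (\<Sum>k<n. A m i j + \<sigma> * E m k i j \<omega>))"
  shows "AE \<omega> in M.
           ((\<lambda>m. \<bar>trace_XYt m (p m) (Abar m \<omega>) ones_mat / (real m * real (p m))
                  - trace_XYt m (p m) (A m) ones_mat / (real m * real (p m))\<bar>) \<longlonglongrightarrow> 0)
         \<and> ((\<lambda>m. \<bar>trace_XYt m (p m) (Abar m \<omega>) (A m) / (real m * real (p m))
                  - trace_XYt m (p m) (A m) (A m) / (real m * real (p m))\<bar>) \<longlonglongrightarrow> 0)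
         \<and> ((\<lambda>m. \<bar>trace_XYt m (p m) (Abar m \<omega>) (Abar m \<omega>) / (real m * real (p m))
                  - trace_XYt m (p m) (A m) (A m) / (real m * real (p m)) - \<sigma>\<^sup>2 / real n\<bar>) \<longlonglongrightarrow> 0)"
proof -
  interpret prob_space M by fact
  have n0: "n > 0" using n_ge by simp
  note [measurable] = E_rv \<xi>_rv
  define I where "I m = {..<n} \<times> {..<m} \<times> {..<p m}" for m
  define J where "J m = {..<m} \<times> {..<p m}" for m
  define r where "r m = 1 / (real m * real (p m))" for m
  define X where "X m = (\<lambda>(k, i, j). E m k i j)" for m
  define \<mu>4 where "\<mu>4 = expectation (\<lambda>x. \<xi> x ^ 4)"
  have r_nn: "r m \<ge> 0" for m unfolding r_def by simp
  have r_sq: "(r m)\<^sup>2 * (real m * real (p m)) = r m" for m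
    unfolding r_def by (simp add: power2_eq_square)
  have fin_I: "finite (I m)" for m unfolding I_def by simp
  have ind: "indep_vars (\<lambda>_. borel) (X m) (I m)" for m
    unfolding X_def I_def by (rule E_indep)
  have mom_int: "integrable M (\<lambda>x. f (E m k i j x)) = integrable M (\<lambda>x. f (\<xi> x))"
    if "k < n" "i < m" "j < p m" "f \<in> borel_measurable borel" for f :: "real \<Rightarrow> real" and m k i j
  proof -
    have "integrable M (\<lambda>x. f (E m k i j x)) = integrable (distr M borel (E m k i j)) f"
      using that by (subst integrable_distr_eq) auto
    also have "\<dots> = integrable (distr M borel \<xi>) f" using E_distr that by simp
    also have "\<dots> = integrable M (\<lambda>x. f (\<xi> x))"
      using that by (subst integrable_distr_eq) auto
    finally show ?thesis .
  qed
  have mom_exp: "expectation (\<lambda>x. f (E m k i j x)) = expectation (\<lambda>x. f (\<xi> x))"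
    if "k < n" "i < m" "j < p m" "f \<in> borel_measurable borel" for f :: "real \<Rightarrow> real" and m k i j
  proof -
    have "expectation (\<lambda>x. f (E m k i j x)) = integral\<^sup>L (distr M borel (E m k i j)) f"
      using that by (subst integral_distr) auto
    also have "\<dots> = integral\<^sup>L (distr M borel \<xi>) f" using E_distr that by simp
    also have "\<dots> = expectation (\<lambda>x. f (\<xi> x))"
      using that by (subst integral_distr) auto
    finally show ?thesis .
  qed
  have e1: "integrable M (E m k i j)" "expectation (E m k i j) = 0"
    if "k < n" "i < m" "j < p m" for m k i j
    using mom_int[OF that, of "\<lambda>x. x"] mom_exp[OF that, of "\<lambda>x. x"] \<xi>_mean by auto
  have e2: "integrable M (\<lambda>x. (E m k i j x)\<^sup>2)" "expectation (\<lambda>x. (E m k i j x)\<^sup>2) = 1"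
    if "k < n" "i < m" "j < p m" for m k i j
    using mom_int[OF that, of "\<lambda>x. x\<^sup>2"] mom_exp[OF that, of "\<lambda>x. x\<^sup>2"] \<xi>_var by auto
  have e4: "integrable M (\<lambda>x. (E m k i j x) ^ 4)" "expectation (\<lambda>x. (E m k i j x) ^ 4) = \<mu>4"
    if "k < n" "i < m" "j < p m" for m k i j
    using mom_int[OF that, of "\<lambda>x. x ^ 4"] mom_exp[OF that, of "\<lambda>x. x ^ 4"] \<xi>_4th
    unfolding \<mu>4_def by auto
  have pind1: "indep_var borel (\<lambda>\<omega>. a * E m k i j \<omega>) borel (\<lambda>\<omega>. b * E m k' i' j' \<omega>)"
    if "(k, i, j) \<in> I m" "(k', i', j') \<in> I m" "(k, i, j) \<noteq> (k', i', j')" for a b m k i j k' i' j'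
  proof -
    have "indep_var borel (\<lambda>\<omega>. (\<lambda>v. a * v (k, i, j)) (restrict (\<lambda>t. X m t \<omega>) {(k, i, j)}))
                      borel (\<lambda>\<omega>. (\<lambda>v. b * v (k', i', j')) (restrict (\<lambda>t. X m t \<omega>) {(k', i', j')}))"
      using that by (intro pair_indep[OF ind]) auto
    then show ?thesis by (simp add: X_def)
  qed
  have lin: "integrable M (\<lambda>\<omega>. (\<Sum>(k, i, j)\<in>I m. c i j * E m k i j \<omega>)\<^sup>2) \<and>
      expectation (\<lambda>\<omega>. (\<Sum>(k, i, j)\<in>I m. c i j * E m k i j \<omega>)\<^sup>2) = (\<Sum>(k, i, j)\<in>I m. (c i j)\<^sup>2)"
    for m and c :: "nat \<Rightarrow> nat \<Rightarrow> real"
  proof -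
    define Y where "Y = (\<lambda>t \<omega>. case t of (k, i, j) \<Rightarrow> c i j * E m k i j \<omega>)"
    have h: "(\<Sum>(k, i, j)\<in>I m. c i j * E m k i j \<omega>) = (\<Sum>t\<in>I m. Y t \<omega>)" for \<omega>
      unfolding Y_def by (intro sum.cong) auto
    have h2: "(\<Sum>(k, i, j)\<in>I m. (c i j)\<^sup>2) = (\<Sum>t\<in>I m. expectation (\<lambda>\<omega>. (Y t \<omega>)\<^sup>2))"
    proof (intro sum.cong refl)
      fix t assume "t \<in> I m"
      then obtain k i j where t: "t = (k, i, j)" "k < n" "i < m" "j < p m" unfolding I_def by (cases t) auto
      have "expectation (\<lambda>\<omega>. (Y t \<omega>)\<^sup>2) = expectation (\<lambda>\<omega>. (c i j)\<^sup>2 * (E m k i j \<omega>)\<^sup>2)"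
        unfolding Y_def t by (simp add: power_mult_distrib)
      also have "\<dots> = (c i j)\<^sup>2" using e2[OF t(2-4)] by simp
      finally show "(case t of (k, i, j) \<Rightarrow> (c i j)\<^sup>2) = expectation (\<lambda>\<omega>. (Y t \<omega>)\<^sup>2)" using t by simp
    qed
    have A1: "integrable M (Y t)" "integrable M (\<lambda>\<omega>. (Y t \<omega>)\<^sup>2)" "expectation (Y t) = 0" if tI: "t \<in> I m" for t
    proof -
      obtain k i j where t: "t = (k, i, j)" "k < n" "i < m" "j < p m" using tI unfolding I_def by (cases t) auto
      show "integrable M (Y t)" unfolding Y_def t using e1[OF t(2-4)] by simp
      show "integrable M (\<lambda>\<omega>. (Y t \<omega>)\<^sup>2)" unfolding Y_def t using e2[OF t(2-4)]
        by (simp add: power_mult_distrib)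
      show "expectation (Y t) = 0" unfolding Y_def t using e1[OF t(2-4)] by simp
    qed
    have A2: "indep_var borel (Y s) borel (Y t)" if "s \<in> I m" "t \<in> I m" "s \<noteq> t" for s t
    proof -
      obtain k i j where s: "s = (k, i, j)" by (cases s) auto
      obtain k' i' j' where t: "t = (k', i', j')" by (cases t) auto
      show ?thesis using pind1[of k i j m k' i' j' "c i j" "c i' j'"] that
        unfolding Y_def s t by (simp add: case_prod_beta)
    qed
    have "integrable M (\<lambda>\<omega>. (\<Sum>t\<in>I m. Y t \<omega>)\<^sup>2)"
      by (rule sum_sq_expectation(1)[of "I m" Y]) (use fin_I A1 A2 in auto)
    moreover have "expectation (\<lambda>\<omega>. (\<Sum>t\<in>I m. Y t \<omega>)\<^sup>2) = (\<Sum>t\<in>I m. expectation (\<lambda>\<omega>. (Y t \<omega>)\<^sup>2))"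
      by (rule sum_sq_expectation(2)[of "I m" Y]) (use fin_I A1 A2 in auto)
    ultimately show ?thesis unfolding h h2 by blast
  qed
  have sum3: "(\<Sum>(k, i, j)\<in>I m. f k i j) = (\<Sum>i<m. \<Sum>j<p m. \<Sum>k<n. f k i j)"
    for m and f :: "nat \<Rightarrow> nat \<Rightarrow> nat \<Rightarrow> real"
  proof -
    have "(\<Sum>(k, i, j)\<in>I m. f k i j) = (\<Sum>k<n. \<Sum>i<m. \<Sum>j<p m. f k i j)"
      unfolding I_def by (simp add: sum.cartesian_product)
    also have "\<dots> = (\<Sum>i<m. \<Sum>k<n. \<Sum>j<p m. f k i j)" by (rule sum.swap)
    also have "\<dots> = (\<Sum>i<m. \<Sum>j<p m. \<Sum>k<n. f k i j)" by (intro sum.cong refl sum.swap)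
    finally show ?thesis .
  qed
  have B0: "B \<ge> 0"
  proof -
    have "0 \<le> trace_XYt 1 (p 1) (A 1) (A 1) / (real 1 * real (p 1))"
      unfolding trace_XYt_def by (intro divide_nonneg_nonneg sum_nonneg) auto
    also have "\<dots> \<le> B" by (rule A_bdd) simp
    finally show ?thesis .
  qed
  define S1 where "S1 m \<omega> = r m * (\<Sum>(k, i, j)\<in>I m. E m k i j \<omega>)" for m \<omega>
  define S2 where "S2 m \<omega> = r m * (\<Sum>(k, i, j)\<in>I m. A m i j * E m k i j \<omega>)" for m \<omega>
  have S1m: "S1 m \<in> borel_measurable M" for m unfolding S1_def I_def by measurable
  have S2m: "S2 m \<in> borel_measurable M" for m unfolding S2_def I_def by measurable
  have S1i: "integrable M (\<lambda>\<omega>. (S1 m \<omega>)\<^sup>2) \<and> expectation (\<lambda>\<omega>. (S1 m \<omega>)\<^sup>2) \<le> real n * r m" for m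
  proof -
    have L: "integrable M (\<lambda>\<omega>. (\<Sum>(k, i, j)\<in>I m. 1 * E m k i j \<omega>)\<^sup>2) \<and>
      expectation (\<lambda>\<omega>. (\<Sum>(k, i, j)\<in>I m. 1 * E m k i j \<omega>)\<^sup>2) = (\<Sum>(k, i, j)\<in>I m. (1::real)\<^sup>2)"
      by (rule lin)
    have c: "(\<Sum>(k, i, j)\<in>I m. (1::real)\<^sup>2) = real n * (real m * real (p m))"
      unfolding sum3 by simp
    have eq: "(\<lambda>\<omega>. (S1 m \<omega>)\<^sup>2) = (\<lambda>\<omega>. (r m)\<^sup>2 * (\<Sum>(k, i, j)\<in>I m. 1 * E m k i j \<omega>)\<^sup>2)"
      unfolding S1_def by (simp add: power_mult_distrib)
    have K: "(r m)\<^sup>2 * (real n * (real m * real (p m))) = real n * r m"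
    proof -
      have "(r m)\<^sup>2 * (real n * (real m * real (p m))) = real n * ((r m)\<^sup>2 * (real m * real (p m)))"
        by (simp add: ac_simps)
      also have "\<dots> = real n * r m" by (simp only: r_sq)
      finally show ?thesis .
    qed
    have E1: "expectation (\<lambda>\<omega>. (\<Sum>(k, i, j)\<in>I m. 1 * E m k i j \<omega>)\<^sup>2) = real n * (real m * real (p m))"
      using L c by simp
    show ?thesis unfolding eq
    proof
      show "integrable M (\<lambda>\<omega>. (r m)\<^sup>2 * (\<Sum>(k, i, j)\<in>I m. 1 * E m k i j \<omega>)\<^sup>2)" using L by simp
      have "expectation (\<lambda>\<omega>. (r m)\<^sup>2 * (\<Sum>(k, i, j)\<in>I m. 1 * E m k i j \<omega>)\<^sup>2)
          = (r m)\<^sup>2 * expectation (\<lambda>\<omega>. (\<Sum>(k, i, j)\<in>I m. 1 * E m k i j \<omega>)\<^sup>2)" by (rule integral_mult_right_zero)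
      also have "\<dots> = real n * r m" unfolding E1 K ..
      finally show "expectation (\<lambda>\<omega>. (r m)\<^sup>2 * (\<Sum>(k, i, j)\<in>I m. 1 * E m k i j \<omega>)\<^sup>2) \<le> real n * r m" by simp
    qed
  qed
  have S2i: "integrable M (\<lambda>\<omega>. (S2 m \<omega>)\<^sup>2) \<and> expectation (\<lambda>\<omega>. (S2 m \<omega>)\<^sup>2) \<le> (real n * B) * r m" for m
  proof -
    have L: "integrable M (\<lambda>\<omega>. (\<Sum>(k, i, j)\<in>I m. A m i j * E m k i j \<omega>)\<^sup>2) \<and>
      expectation (\<lambda>\<omega>. (\<Sum>(k, i, j)\<in>I m. A m i j * E m k i j \<omega>)\<^sup>2) = (\<Sum>(k, i, j)\<in>I m. (A m i j)\<^sup>2)"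
      by (rule lin)
    have c: "(\<Sum>(k, i, j)\<in>I m. (A m i j)\<^sup>2) = real n * trace_XYt m (p m) (A m) (A m)"
      unfolding sum3 trace_XYt_def by (simp add: sum_distrib_left power2_eq_square)
    have tb: "r m * trace_XYt m (p m) (A m) (A m) \<le> B"
    proof (cases "m = 0")
      case True then show ?thesis using B0 by (simp add: r_def)
    next
      case False then show ?thesis using A_bdd[of m] by (simp add: r_def)
    qed
    have eq: "(\<lambda>\<omega>. (S2 m \<omega>)\<^sup>2) = (\<lambda>\<omega>. (r m)\<^sup>2 * (\<Sum>(k, i, j)\<in>I m. A m i j * E m k i j \<omega>)\<^sup>2)"
      unfolding S2_def by (simp add: power_mult_distrib)
    have "(r m)\<^sup>2 * (real n * trace_XYt m (p m) (A m) (A m)) = real n * r m * (r m * trace_XYt m (p m) (A m) (A m))"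
      by (simp add: power2_eq_square)
    also have "\<dots> \<le> real n * r m * B" using tb r_nn[of m] by (intro mult_left_mono) auto
    finally show ?thesis unfolding eq using L c by (simp add: algebra_simps)
  qed
  define Eb where "Eb m \<omega> i j = (1 / real n) * (\<Sum>k<n. E m k i j \<omega>)" for m \<omega> i j
  define Yw where "Yw m i j \<omega> = (Eb m \<omega> i j)\<^sup>2 - 1 / real n" for m i j \<omega>
  define C where "C = 2 * \<mu>4 + 2 / (real n)\<^sup>2"
  have Ebm[measurable]: "(\<lambda>\<omega>. Eb m \<omega> i j) \<in> borel_measurable M" for m i j unfolding Eb_def by measurable
  have Ywm[measurable]: "Yw m i j \<in> borel_measurable M" for m i j unfolding Yw_def by measurable
  have ebsq: "integrable M (\<lambda>\<omega>. (\<Sum>k<n. E m k i j \<omega>)\<^sup>2) \<and> expectation (\<lambda>\<omega>. (\<Sum>k<n. E m k i j \<omega>)\<^sup>2) = real n"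
    if ij: "i < m" "j < p m" for m i j
  proof -
    have A1: "integrable M (E m k i j)" "integrable M (\<lambda>\<omega>. (E m k i j \<omega>)\<^sup>2)" "expectation (E m k i j) = 0"
      if "k \<in> {..<n}" for k using e1[of k i m j] e2[of k i m j] that ij by auto
    have A2: "indep_var borel (E m k i j) borel (E m k' i j)" if "k \<in> {..<n}" "k' \<in> {..<n}" "k \<noteq> k'" for k k'
      using pind1[of k i j m k' i j 1 1] that ij unfolding I_def by simp
    have "integrable M (\<lambda>\<omega>. (\<Sum>k\<in>{..<n}. E m k i j \<omega>)\<^sup>2)"
      by (rule sum_sq_expectation(1)[of "{..<n}" "\<lambda>k. E m k i j"]) (use A1 A2 in auto)
    moreover have "expectation (\<lambda>\<omega>. (\<Sum>k\<in>{..<n}. E m k i j \<omega>)\<^sup>2) = (\<Sum>k\<in>{..<n}. expectation (\<lambda>\<omega>. (E m k i j \<omega>)\<^sup>2))"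
      by (rule sum_sq_expectation(2)[of "{..<n}" "\<lambda>k. E m k i j"]) (use A1 A2 in auto)
    moreover have "(\<Sum>k\<in>{..<n}. expectation (\<lambda>\<omega>. (E m k i j \<omega>)\<^sup>2)) = real n"
      using e2[of _ i m j] ij by simp
    ultimately show ?thesis by simp
  qed
  have Yw1: "integrable M (Yw m i j)" "expectation (Yw m i j) = 0" if ij: "i < m" "j < p m" for m i j
  proof -
    have eq: "Yw m i j = (\<lambda>\<omega>. (1 / real n)\<^sup>2 * (\<Sum>k<n. E m k i j \<omega>)\<^sup>2 - 1 / real n)"
      unfolding Yw_def Eb_def by (simp add: power_mult_distrib power_divide fun_eq_iff)
    show "integrable M (Yw m i j)" unfolding eq using ebsq[OF ij] by simp
    have "expectation (Yw m i j) = (1 / real n)\<^sup>2 * real n - 1 / real n"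
      unfolding eq using ebsq[OF ij] by (simp add: prob_space)
    also have "\<dots> = 0" using n0 by (simp add: power2_eq_square)
    finally show "expectation (Yw m i j) = 0" .
  qed
  have pw: "(Yw m i j \<omega>)\<^sup>2 \<le> 2 / real n * (\<Sum>k<n. (E m k i j \<omega>) ^ 4) + 2 / (real n)\<^sup>2" for m i j \<omega>
  proof -
    have a: "(Eb m \<omega> i j)\<^sup>2 \<le> (\<Sum>k<n. (E m k i j \<omega>)\<^sup>2) / real n"
    proof -
      have "(Eb m \<omega> i j)\<^sup>2 = (\<Sum>k<n. E m k i j \<omega> / real n)\<^sup>2"
        unfolding Eb_def by (simp add: sum_divide_distrib)
      also have "\<dots> \<le> (\<Sum>k<n. (E m k i j \<omega> / real n)\<^sup>2) * card {..<n}"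
        by (rule sum_squared_le_sum_of_squares)
      also have "\<dots> = (\<Sum>k<n. (E m k i j \<omega>)\<^sup>2) / real n"
        using n0 by (simp add: power_divide sum_divide_distrib[symmetric] power2_eq_square)
      finally show ?thesis .
    qed
    have b: "((\<Sum>k<n. (E m k i j \<omega>)\<^sup>2) / real n)\<^sup>2 \<le> (\<Sum>k<n. (E m k i j \<omega>) ^ 4) / real n"
    proof -
      have "((\<Sum>k<n. (E m k i j \<omega>)\<^sup>2) / real n)\<^sup>2 = (\<Sum>k<n. (E m k i j \<omega>)\<^sup>2 / real n)\<^sup>2"
        by (simp add: sum_divide_distrib)
      also have "\<dots> \<le> (\<Sum>k<n. ((E m k i j \<omega>)\<^sup>2 / real n)\<^sup>2) * card {..<n}"
        by (rule sum_squared_le_sum_of_squares)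
      also have "\<dots> = (\<Sum>k<n. (E m k i j \<omega>) ^ 4) / real n"
        using n0 by (simp add: power_divide sum_divide_distrib[symmetric] power2_eq_square[of "real n"] flip: power_mult)
      finally show ?thesis .
    qed
    have c: "(Eb m \<omega> i j) ^ 4 \<le> (\<Sum>k<n. (E m k i j \<omega>) ^ 4) / real n"
    proof -
      have "(Eb m \<omega> i j) ^ 4 = ((Eb m \<omega> i j)\<^sup>2)\<^sup>2" by simp
      also have "\<dots> \<le> ((\<Sum>k<n. (E m k i j \<omega>)\<^sup>2) / real n)\<^sup>2"
        using a by (intro power_mono) auto
      finally show ?thesis using b by linarith
    qed
    have "(Yw m i j \<omega>)\<^sup>2 \<le> 2 * (Eb m \<omega> i j) ^ 4 + 2 * (1 / real n)\<^sup>2"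
    proof -
      have gen: "(x - y)\<^sup>2 \<le> 2 * x\<^sup>2 + 2 * y\<^sup>2" for x y :: real
      proof -
        have "0 \<le> (x + y)\<^sup>2" by simp
        then show ?thesis by (simp add: power2_eq_square algebra_simps)
      qed
      show ?thesis using gen[of "(Eb m \<omega> i j)\<^sup>2" "1 / real n"] unfolding Yw_def
        by (simp flip: power_mult)
    qed
    then show ?thesis using c by (simp add: power_divide)
  qed
  have Yw2: "integrable M (\<lambda>\<omega>. (Yw m i j \<omega>)\<^sup>2) \<and> expectation (\<lambda>\<omega>. (Yw m i j \<omega>)\<^sup>2) \<le> C"
    if ij: "i < m" "j < p m" for m i j
  proof -
    define g where "g \<omega> = 2 / real n * (\<Sum>k<n. (E m k i j \<omega>) ^ 4) + 2 / (real n)\<^sup>2" for \<omega>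
    have gi: "integrable M g" unfolding g_def using e4(1)[of _ i m j] ij by (intro Bochner_Integration.integrable_add integrable_mult_right Bochner_Integration.integrable_sum) auto
    have gE: "expectation g = C"
    proof -
      have s4: "integrable M (\<lambda>\<omega>. \<Sum>k<n. (E m k i j \<omega>) ^ 4)"
        using e4(1)[of _ i m j] ij by (intro Bochner_Integration.integrable_sum) auto
      have "expectation g = expectation (\<lambda>\<omega>. 2 / real n * (\<Sum>k<n. (E m k i j \<omega>) ^ 4)) + expectation (\<lambda>\<omega>. 2 / (real n)\<^sup>2)"
        unfolding g_def by (rule Bochner_Integration.integral_add) (use s4 in auto)
      also have "\<dots> = 2 / real n * expectation (\<lambda>\<omega>. \<Sum>k<n. (E m k i j \<omega>) ^ 4) + 2 / (real n)\<^sup>2"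
        by (simp add: prob_space del: integral_sum')
      also have "expectation (\<lambda>\<omega>. \<Sum>k<n. (E m k i j \<omega>) ^ 4) = (\<Sum>k<n. expectation (\<lambda>\<omega>. (E m k i j \<omega>) ^ 4))"
        using e4(1)[of _ i m j] ij by (intro Bochner_Integration.integral_sum) auto
      finally have "expectation g = 2 / real n * (\<Sum>k<n. expectation (\<lambda>\<omega>. (E m k i j \<omega>) ^ 4)) + 2 / (real n)\<^sup>2" .
      also have "\<dots> = 2 / real n * (real n * \<mu>4) + 2 / (real n)\<^sup>2" using e4(2)[of _ i m j] ij by simp
      also have "\<dots> = C" unfolding C_def using n0 by simp
      finally show ?thesis .
    qed
    have i2: "integrable M (\<lambda>\<omega>. (Yw m i j \<omega>)\<^sup>2)"
    proof (rule Bochner_Integration.integrable_bound[OF gi])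
      show "(\<lambda>\<omega>. (Yw m i j \<omega>)\<^sup>2) \<in> borel_measurable M" by measurable
      show "AE x in M. norm ((Yw m i j x)\<^sup>2) \<le> norm (g x)"
      proof (rule AE_I2)
        fix x
        have "0 \<le> (Yw m i j x)\<^sup>2" by simp
        also have "\<dots> \<le> g x" unfolding g_def by (rule pw)
        finally show "norm ((Yw m i j x)\<^sup>2) \<le> norm (g x)" using pw[of m i j x] unfolding g_def by simp
      qed
    qed
    have "expectation (\<lambda>\<omega>. (Yw m i j \<omega>)\<^sup>2) \<le> expectation g"
      by (rule Bochner_Integration.integral_mono[OF i2 gi]) (unfold g_def, rule pw)
    then show ?thesis using i2 gE by simp
  qed
  have Ywind: "indep_var borel (Yw m i j) borel (Yw m i' j')"
    if "(i, j) \<in> J m" "(i', j') \<in> J m" "(i, j) \<noteq> (i', j')" for m i j i' j'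
  proof -
    define f where "f i j v = ((1 / real n) * (\<Sum>k<n. v (k, i, j)))\<^sup>2 - 1 / real n" for i j and v :: "nat \<times> nat \<times> nat \<Rightarrow> real"
    have fm: "f i j \<in> borel_measurable (PiM ({..<n} \<times> {(i, j)}) (\<lambda>_. borel))" for i j
      unfolding f_def by measurable
    have "indep_var borel (\<lambda>\<omega>. f i j (restrict (\<lambda>t. X m t \<omega>) ({..<n} \<times> {(i, j)})))
                    borel (\<lambda>\<omega>. f i' j' (restrict (\<lambda>t. X m t \<omega>) ({..<n} \<times> {(i', j')})))"
      using that by (intro pair_indep[OF ind] fm) (auto simp: I_def J_def)
    moreover have "(\<lambda>\<omega>. f a b (restrict (\<lambda>t. X m t \<omega>) ({..<n} \<times> {(a, b)}))) = Yw m a b" for a b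
      unfolding f_def Yw_def Eb_def X_def by (auto intro!: sum.cong simp: fun_eq_iff)
    ultimately show ?thesis by simp
  qed
  define W where "W m \<omega> = r m * (\<Sum>t\<in>J m. (case t of (i, j) \<Rightarrow> Yw m i j) \<omega>)" for m \<omega>
  have Wm: "W m \<in> borel_measurable M" for m
    unfolding W_def J_def by (intro borel_measurable_times borel_measurable_const borel_measurable_sum) (auto split: prod.splits)
  have Wi: "integrable M (\<lambda>\<omega>. (W m \<omega>)\<^sup>2) \<and> expectation (\<lambda>\<omega>. (W m \<omega>)\<^sup>2) \<le> C * r m" for m
  proof -
    let ?Y = "\<lambda>t. case t of (i, j) \<Rightarrow> Yw m i j"
    have A1: "integrable M (?Y t)" "integrable M (\<lambda>\<omega>. (?Y t \<omega>)\<^sup>2)" "expectation (?Y t) = 0"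
      "expectation (\<lambda>\<omega>. (?Y t \<omega>)\<^sup>2) \<le> C"
      if tJ: "t \<in> J m" for t
    proof -
      obtain i j where t: "t = (i, j)" "i < m" "j < p m" using tJ unfolding J_def by (cases t) auto
      show "integrable M (?Y t)" "expectation (?Y t) = 0" using Yw1[OF t(2,3)] t(1) by auto
      show "integrable M (\<lambda>\<omega>. (?Y t \<omega>)\<^sup>2)" "expectation (\<lambda>\<omega>. (?Y t \<omega>)\<^sup>2) \<le> C"
        using Yw2[OF t(2,3)] t(1) by auto
    qed
    have A2: "indep_var borel (?Y s) borel (?Y t)" if "s \<in> J m" "t \<in> J m" "s \<noteq> t" for s t
    proof -
      obtain i j where s: "s = (i, j)" by (cases s) auto
      obtain i' j' where t: "t = (i', j')" by (cases t) auto
      show ?thesis using Ywind[of i j m i' j'] that unfolding s t by simp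
    qed
    have finJ: "finite (J m)" unfolding J_def by simp
    have i1: "integrable M (\<lambda>\<omega>. (\<Sum>t\<in>J m. ?Y t \<omega>)\<^sup>2)"
      by (rule sum_sq_expectation(1)[of "J m" ?Y]) (use finJ A1 A2 in auto)
    have e1': "expectation (\<lambda>\<omega>. (\<Sum>t\<in>J m. ?Y t \<omega>)\<^sup>2) = (\<Sum>t\<in>J m. expectation (\<lambda>\<omega>. (?Y t \<omega>)\<^sup>2))"
      by (rule sum_sq_expectation(2)[of "J m" ?Y]) (use finJ A1 A2 in auto)
    have "(\<Sum>t\<in>J m. expectation (\<lambda>\<omega>. (?Y t \<omega>)\<^sup>2)) \<le> real (card (J m)) * C"
      by (rule sum_bounded_above) (use A1(4) in auto)
    also have "real (card (J m)) = real m * real (p m)" unfolding J_def by simp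
    finally have bd: "expectation (\<lambda>\<omega>. (\<Sum>t\<in>J m. ?Y t \<omega>)\<^sup>2) \<le> real m * real (p m) * C"
      using e1' by simp
    have eq: "(\<lambda>\<omega>. (W m \<omega>)\<^sup>2) = (\<lambda>\<omega>. (r m)\<^sup>2 * (\<Sum>t\<in>J m. ?Y t \<omega>)\<^sup>2)"
      unfolding W_def by (simp add: power_mult_distrib)
    show ?thesis unfolding eq
    proof
      show "integrable M (\<lambda>\<omega>. (r m)\<^sup>2 * (\<Sum>t\<in>J m. ?Y t \<omega>)\<^sup>2)" using i1 by simp
      have "expectation (\<lambda>\<omega>. (r m)\<^sup>2 * (\<Sum>t\<in>J m. ?Y t \<omega>)\<^sup>2) = (r m)\<^sup>2 * expectation (\<lambda>\<omega>. (\<Sum>t\<in>J m. ?Y t \<omega>)\<^sup>2)"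
        by (rule integral_mult_right_zero)
      also have "\<dots> \<le> (r m)\<^sup>2 * (real m * real (p m) * C)" using bd by (intro mult_left_mono) auto
      also have "\<dots> = ((r m)\<^sup>2 * (real m * real (p m))) * C" by (simp add: ac_simps)
      also have "\<dots> = C * r m" by (simp only: r_sq) (rule mult.commute)
      finally show "expectation (\<lambda>\<omega>. (r m)\<^sup>2 * (\<Sum>t\<in>J m. ?Y t \<omega>)\<^sup>2) \<le> C * r m" .
    qed
  qed
  have sr: "summable r"
  proof (rule summable_comparison_test_ev)
    have "eventually (\<lambda>m. real m / real (p m) < c + 1) sequentially"
      using order_tendstoD(2)[OF ratio] by simp
    then show "eventually (\<lambda>m. norm (r m) \<le> (c + 1) * inverse (real m ^ 2)) sequentially"
    proof eventually_elim
      case (elim m)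
      show ?case
      proof (cases "m = 0 \<or> p m = 0")
        case True then show ?thesis using c_pos by (auto simp: r_def)
      next
        case False
        then have rm: "r m = (real m / real (p m)) / (real m)\<^sup>2"
          by (simp add: r_def power2_eq_square)
        have "(real m / real (p m)) / (real m)\<^sup>2 \<le> (c + 1) / (real m)\<^sup>2"
          using elim by (intro divide_right_mono) auto
        then show ?thesis using rm r_nn[of m] by (simp add: divide_inverse)
      qed
    qed
    show "summable (\<lambda>m. (c + 1) * inverse (real m ^ 2))"
      by (intro summable_mult inverse_power_summable) simp
  qed
  have ae1: "AE \<omega> in M. (\<lambda>m. S1 m \<omega>) \<longlonglongrightarrow> 0"
    by (rule ae_tendsto_zero_of_sq[OF S1m _ _ sr, where K="real n"]) (use S1i in auto)
  have ae2: "AE \<omega> in M. (\<lambda>m. S2 m \<omega>) \<longlonglongrightarrow> 0"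
    by (rule ae_tendsto_zero_of_sq[OF S2m _ _ sr, where K="real n * B"]) (use S2i in auto)
  have ae3: "AE \<omega> in M. (\<lambda>m. W m \<omega>) \<longlonglongrightarrow> 0"
    by (rule ae_tendsto_zero_of_sq[OF Wm _ _ sr, where K=C]) (use Wi in auto)
  have Abar_eq: "Abar m \<omega> i j = A m i j + \<sigma> * Eb m \<omega> i j" for m \<omega> i j
    unfolding Abar_def Eb_def using n0 by (simp add: sum.distrib sum_distrib_left[symmetric] field_simps)
  have dv: "x / (real m * real (p m)) = x * r m" for x m by (simp add: r_def)
  have ev: "eventually (\<lambda>m. m > 0 \<and> p m > 0) sequentially"
  proof -
    have "eventually (\<lambda>m. p m \<ge> 1) sequentially" using p_inf by (simp add: filterlim_at_top)
    moreover have "eventually (\<lambda>m. m > (0::nat)) sequentially" by (rule eventually_gt_at_top)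
    ultimately show ?thesis by eventually_elim auto
  qed
  have h1: "trace_XYt m (p m) (Abar m \<omega>) ones_mat / (real m * real (p m))
                  - trace_XYt m (p m) (A m) ones_mat / (real m * real (p m)) = \<sigma> / real n * S1 m \<omega>" for m \<omega>
  proof -
    have "trace_XYt m (p m) (Abar m \<omega>) ones_mat - trace_XYt m (p m) (A m) ones_mat
        = \<sigma> / real n * (\<Sum>i<m. \<Sum>j<p m. \<Sum>k<n. E m k i j \<omega>)"
      unfolding trace_XYt_def Abar_eq ones_mat_def Eb_def
      by (simp add: sum.distrib sum_distrib_left)
    then show ?thesis unfolding dv S1_def sum3 by (simp add: left_diff_distrib[symmetric])
  qed
  have h2: "trace_XYt m (p m) (Abar m \<omega>) (A m) / (real m * real (p m))
                  - trace_XYt m (p m) (A m) (A m) / (real m * real (p m)) = \<sigma> / real n * S2 m \<omega>" for m \<omega>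
  proof -
    have "trace_XYt m (p m) (Abar m \<omega>) (A m) - trace_XYt m (p m) (A m) (A m)
        = \<sigma> / real n * (\<Sum>i<m. \<Sum>j<p m. \<Sum>k<n. A m i j * E m k i j \<omega>)"
      unfolding trace_XYt_def Abar_eq Eb_def
      by (simp add: sum.distrib sum_distrib_left algebra_simps)
    then show ?thesis unfolding dv S2_def sum3 by (simp add: left_diff_distrib[symmetric])
  qed
  have h3: "trace_XYt m (p m) (Abar m \<omega>) (Abar m \<omega>) / (real m * real (p m))
                  - trace_XYt m (p m) (A m) (A m) / (real m * real (p m)) - \<sigma>\<^sup>2 / real n
             = 2 * \<sigma> / real n * S2 m \<omega> + \<sigma>\<^sup>2 * W m \<omega>" if mp: "m > 0" "p m > 0" for m \<omega>
  proof -
    define P where "P = (\<Sum>i<m. \<Sum>j<p m. A m i j * Eb m \<omega> i j)"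
    define Q where "Q = (\<Sum>i<m. \<Sum>j<p m. (Eb m \<omega> i j)\<^sup>2)"
    have t: "trace_XYt m (p m) (Abar m \<omega>) (Abar m \<omega>) = trace_XYt m (p m) (A m) (A m) + 2 * \<sigma> * P + \<sigma>\<^sup>2 * Q"
      unfolding trace_XYt_def Abar_eq P_def Q_def
      by (simp add: sum.distrib sum_distrib_left power2_eq_square algebra_simps)
    have s2: "S2 m \<omega> = r m * (real n * P)"
    proof -
      have "(\<Sum>i<m. \<Sum>j<p m. \<Sum>k<n. A m i j * E m k i j \<omega>) = real n * P"
      proof -
        have "(\<Sum>k<n. A m i j * E m k i j \<omega>) = real n * (A m i j * Eb m \<omega> i j)" for i j
          unfolding Eb_def using n0 by (simp add: sum_distrib_left[symmetric])
        then show ?thesis unfolding P_def by (simp add: sum_distrib_left)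
      qed
      then show ?thesis unfolding S2_def sum3 by simp
    qed
    have w: "W m \<omega> = r m * Q - 1 / real n"
    proof -
      have "(\<Sum>t\<in>J m. (case t of (i, j) \<Rightarrow> Yw m i j) \<omega>) = (\<Sum>i<m. \<Sum>j<p m. Yw m i j \<omega>)"
        unfolding J_def by (simp add: sum.cartesian_product split_beta')
      also have "\<dots> = Q - real m * real (p m) / real n"
        unfolding Q_def Yw_def by (simp add: sum_subtractf)
      finally have "W m \<omega> = r m * (Q - real m * real (p m) / real n)" unfolding W_def by simp
      also have "\<dots> = r m * Q - 1 / real n" using mp n0 by (simp add: r_def right_diff_distrib)
      finally show ?thesis .
    qed
    show ?thesis unfolding dv t s2 w using n0 by (simp add: algebra_simps)
  qed
  show ?thesis using ae1 ae2 ae3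
  proof eventually_elim
    case (elim \<omega>)
    have l1: "(\<lambda>m. \<bar>\<sigma> / real n * S1 m \<omega>\<bar>) \<longlonglongrightarrow> 0"
      by (intro tendsto_rabs_zero tendsto_mult_right_zero elim)
    have l2: "(\<lambda>m. \<bar>\<sigma> / real n * S2 m \<omega>\<bar>) \<longlonglongrightarrow> 0"
      by (intro tendsto_rabs_zero tendsto_mult_right_zero elim)
    have l3: "(\<lambda>m. \<bar>2 * \<sigma> / real n * S2 m \<omega> + \<sigma>\<^sup>2 * W m \<omega>\<bar>) \<longlonglongrightarrow> 0"
      by (intro tendsto_rabs_zero tendsto_add_zero tendsto_mult_right_zero elim)
    have l3': "(\<lambda>m. \<bar>trace_XYt m (p m) (Abar m \<omega>) (Abar m \<omega>) / (real m * real (p m))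
                  - trace_XYt m (p m) (A m) (A m) / (real m * real (p m)) - \<sigma>\<^sup>2 / real n\<bar>) \<longlonglongrightarrow> 0"
      by (rule Lim_transform_eventually[OF l3]) (use ev in \<open>eventually_elim, simp add: h3\<close>)
    show ?case unfolding h1 h2 using l1 l2 l3' by blast
  qed
qed

end
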